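(* Let $G=(V,E)$ be a finite undirected graph with independence number $\alpha_G$. For all $v\in V$, choose numbers $q_v\in(0,1]$ and define \[ c_v=\sum_{S\subseteq V\setminus\{v\}}\frac{\lambda_{S,v}}{1+|S|},\quad \lambda_{S,v}=\Big(\prod_{w\in S}q_w\Big)\Big(\prod_{u\in V\setminus(\{v\}\cup S)}(1-q_u)\Big),\quad Q_v=1-\prod_{w\in\mathcal{N}_v}(1-q_w). \] Then \[ Q=\sum_{v\in V}\frac{q_v c_v}{Q_v}\le\frac{\alpha_G+1}{1-e^{-1}}. \]
   Context: $\mathcal{N}_v=\{v\}\cup\{w:(v,w)\in E\}$ is the closed neighborhood of $v$. The independence number $\alpha_G$ is the largest size of a set of pairwise non-adjacent vertices. *)

theory Defs
  imports Complex_Main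
begin

definition simple_graph :: "'a set \<Rightarrow> ('a \<Rightarrow> 'a \<Rightarrow> bool) \<Rightarrow> bool" where
  "simple_graph V E \<longleftrightarrow> finite V \<and> (\<forall>x y. E x y \<longrightarrow> x \<in> V \<and> y \<in> V)
     \<and> (\<forall>x y. E x y \<longrightarrow> E y x) \<and> (\<forall>x. \<not> E x x)"

definition closed_nbhd :: "('a \<Rightarrow> 'a \<Rightarrow> bool) \<Rightarrow> 'a \<Rightarrow> 'a set" where
  "closed_nbhd E v = {v} \<union> {w. E v w}"

definition independent_set :: "'a set \<Rightarrow> ('a \<Rightarrow> 'a \<Rightarrow> bool) \<Rightarrow> 'a set \<Rightarrow> bool" where
  "independent_set V E I \<longleftrightarrow> I \<subseteq> V \<and> (\<forall>x\<in>I. \<forall>y\<in>I. \<not> E x y)"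

definition independence_number :: "'a set \<Rightarrow> ('a \<Rightarrow> 'a \<Rightarrow> bool) \<Rightarrow> nat" where
  "independence_number V E = Max (card ` {I. independent_set V E I})"

definition lam :: "'a set \<Rightarrow> ('a \<Rightarrow> real) \<Rightarrow> 'a set \<Rightarrow> 'a \<Rightarrow> real" where
  "lam V q S v = (\<Prod>w\<in>S. q w) * (\<Prod>u\<in>V - ({v} \<union> S). 1 - q u)"

definition cval :: "'a set \<Rightarrow> ('a \<Rightarrow> real) \<Rightarrow> 'a \<Rightarrow> real" where
  "cval V q v = (\<Sum>S\<in>Pow (V - {v}). lam V q S v / (1 + real (card S)))"

definition Qval :: "('a \<Rightarrow> 'a \<Rightarrow> bool) \<Rightarrow> ('a \<Rightarrow> real) \<Rightarrow> 'a \<Rightarrow> real" where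
  "Qval E q v = 1 - (\<Prod>w\<in>closed_nbhd E v. 1 - q w)"

end

theory Submission
  imports Defs "HOL-Analysis.Convex"
begin

lemma exp_bound:
  fixes m :: real
  assumes "0 \<le> m" "m \<le> 1"
  shows "(1 - exp (-1)) * m \<le> 1 - exp (-m)"
proof -
  have "exp ((1 - m) *\<^sub>R 0 + m *\<^sub>R (-1)) \<le> (1 - m) * exp 0 + m * exp (-1)"
    using assms by (intro convex_onD[OF exp_convex]) auto
  then show ?thesis by (simp add: algebra_simps)
qed

lemma sum_lam:
  assumes "finite V"
  shows "(\<Sum>S\<in>Pow (V - {v}). lam V q S v) = 1"
proof -
  have "(\<Prod>x\<in>V - {v}. q x + (1 - q x)) = (\<Sum>X\<in>Pow (V-{v}). (\<Prod>x\<in>X. q x) * (\<Prod>x\<in>(V-{v})-X. 1 - q x))"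
    by (rule prod_add) (use assms in auto)
  moreover have "\<And>X. (V-{v})-X = V - ({v} \<union> X)" by auto
  ultimately show ?thesis by (simp add: lam_def)
qed

lemma lam_nonneg:
  assumes "\<And>v. v \<in> V \<Longrightarrow> 0 < q v \<and> q v \<le> 1" "S \<subseteq> V"
  shows "0 \<le> lam V q S v"
  unfolding lam_def using assms
  by (intro mult_nonneg_nonneg prod_nonneg) (auto, fastforce)

lemma cval_bounds:
  assumes "finite V" "\<And>v. v \<in> V \<Longrightarrow> 0 < q v \<and> q v \<le> 1"
  shows "0 \<le> cval V q v" "cval V q v \<le> 1"
proof -
  have nn: "\<And>S. S \<in> Pow (V - {v}) \<Longrightarrow> 0 \<le> lam V q S v"
    by (rule lam_nonneg) (use assms in auto)
  show "0 \<le> cval V q v" unfolding cval_def using nn by (intro sum_nonneg) auto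
  have "cval V q v \<le> (\<Sum>S\<in>Pow (V - {v}). lam V q S v)"
    unfolding cval_def
  proof (rule sum_mono)
    fix S assume "S \<in> Pow (V - {v})"
    then have "0 \<le> lam V q S v" using nn by auto
    then show "lam V q S v / (1 + real (card S)) \<le> lam V q S v"
      by (simp add: divide_le_eq mult_le_cancel_left1)
  qed
  then show "cval V q v \<le> 1" using sum_lam[OF assms(1)] by simp
qed

lemma sum_qc:
  assumes fin: "finite V" and qb: "\<And>v. v \<in> V \<Longrightarrow> 0 < q v \<and> q v \<le> 1"
  shows "(\<Sum>v\<in>V. q v * cval V q v) \<le> 1"
proof -
  define P where "P T = (\<Prod>w\<in>T. q w) * (\<Prod>u\<in>V-T. 1 - q u)" for T
  define g where "g T = P T / real (card T)" for T
  have P_nn: "0 \<le> P T" if "T \<subseteq> V" for T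
    unfolding P_def using qb that by (intro mult_nonneg_nonneg prod_nonneg) (auto, fastforce)
  have step1: "q v * cval V q v = (\<Sum>T\<in>Pow V. if v \<in> T then g T else 0)" if v: "v \<in> V" for v
  proof -
    have "q v * cval V q v = (\<Sum>S\<in>Pow (V - {v}). q v * (lam V q S v / (1 + real (card S))))"
      unfolding cval_def by (simp add: sum_distrib_left)
    also have "\<dots> = (\<Sum>S\<in>Pow (V - {v}). g (insert v S))"
    proof (rule sum.cong[OF refl])
      fix S assume S: "S \<in> Pow (V - {v})"
      then have vS: "v \<notin> S" and finS: "finite S" using fin finite_subset by auto
      have "V - insert v S = V - ({v} \<union> S)" by auto
      then have "q v * lam V q S v = P (insert v S)"
        unfolding lam_def P_def using vS finS by (simp add: mult.assoc)
      moreover have "real (card (insert v S)) = 1 + real (card S)" using vS finS by simp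
      ultimately show "q v * (lam V q S v / (1 + real (card S))) = g (insert v S)"
        unfolding g_def by simp
    qed
    also have "\<dots> = (\<Sum>T\<in>{T\<in>Pow V. v \<in> T}. g T)"
    proof (rule sum.reindex_bij_betw)
      show "bij_betw (insert v) (Pow (V - {v})) {T \<in> Pow V. v \<in> T}"
        by (rule bij_betw_byWitness[where f' = "\<lambda>T. T - {v}"]) (use v in auto)
    qed
    also have "\<dots> = (\<Sum>T\<in>Pow V. if v \<in> T then g T else 0)"
      by (rule sum.inter_filter) (use fin in auto)
    finally show ?thesis .
  qed
  have "(\<Sum>v\<in>V. q v * cval V q v) = (\<Sum>v\<in>V. \<Sum>T\<in>Pow V. if v \<in> T then g T else 0)"
    using step1 by simp
  also have "\<dots> = (\<Sum>T\<in>Pow V. \<Sum>v\<in>V. if v \<in> T then g T else 0)"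
    by (rule sum.swap)
  also have "\<dots> \<le> (\<Sum>T\<in>Pow V. P T)"
  proof (rule sum_mono)
    fix T assume T: "T \<in> Pow V"
    have "(\<Sum>v\<in>V. if v \<in> T then g T else 0) = (\<Sum>v\<in>{v\<in>V. v \<in> T}. g T)"
      by (rule sum.inter_filter[symmetric]) (use fin in auto)
    also have "{v\<in>V. v \<in> T} = T" using T by auto
    finally have "(\<Sum>v\<in>V. if v \<in> T then g T else 0) = real (card T) * g T" by simp
    also have "\<dots> \<le> P T"
      using P_nn[of T] T unfolding g_def by (cases "card T = 0") auto
    finally show "(\<Sum>v\<in>V. if v \<in> T then g T else 0) \<le> P T" .
  qed
  also have "(\<Sum>T\<in>Pow V. P T) = (\<Prod>x\<in>V. q x + (1 - q x))"
    unfolding P_def by (rule prod_add[symmetric]) (rule fin)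
  also have "\<dots> = 1" by simp
  finally show ?thesis .
qed

lemma caro_wei:
  fixes E :: "'a \<Rightarrow> 'a \<Rightarrow> bool" and q :: "'a \<Rightarrow> real"
  assumes sym: "\<And>x y. E x y \<Longrightarrow> E y x" and irr: "\<And>x. \<not> E x x"
  shows "finite W \<Longrightarrow> (\<forall>v\<in>W. 0 < q v) \<Longrightarrow> \<exists>I. I \<subseteq> W \<and> (\<forall>x\<in>I. \<forall>y\<in>I. \<not> E x y) \<and>
     (\<Sum>v\<in>W. q v / (\<Sum>w\<in>{v} \<union> {w\<in>W. E v w}. q w)) \<le> real (card I)"
proof (induction W rule: finite_psubset_induct)
  case (psubset W)
  show ?case
  proof (cases "W = {}")
    case True
    then show ?thesis by auto
  next
    case False
    define N where "N W u = {u} \<union> {w\<in>W. E u w}" for W u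
    define s where "s W u = (\<Sum>w\<in>N W u. q w)" for W u
    have finN: "finite (N W u)" for u unfolding N_def using psubset.hyps by auto
    have s_ge: "q u \<le> s W' u" if "W' \<subseteq> W" "u \<in> W" for u W'
    proof -
      have "finite (N W' u)" using finite_subset[OF that(1) psubset.hyps] unfolding N_def by auto
      moreover have "N W' u \<subseteq> W" using that unfolding N_def by auto
      ultimately have "(\<Sum>w\<in>{u}. q w) \<le> s W' u" unfolding s_def
      proof (intro sum_mono2)
        show "{u} \<subseteq> N W' u" unfolding N_def by auto
        show "0 \<le> q b" if "b \<in> N W' u - {u}" for b
        proof -
          have "b \<in> W" using that \<open>W' \<subseteq> W\<close> unfolding N_def by auto
          then show ?thesis using psubset.prems by (simp add: less_imp_le)
        qed
      qed simp
      then show ?thesis by simp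
    qed
    obtain v where v: "v \<in> W" "\<And>u. u \<in> W \<Longrightarrow> s W v \<le> s W u"
    proof -
      have "Min (s W ` W) \<in> s W ` W" using False psubset.hyps by (intro Min_in) auto
      then obtain v where "v \<in> W" "s W v = Min (s W ` W)" by auto
      moreover have "\<And>u. u \<in> W \<Longrightarrow> Min (s W ` W) \<le> s W u" using psubset.hyps by (intro Min_le) auto
      ultimately show ?thesis using that by metis
    qed
    have sv_pos: "0 < s W v" using s_ge[of W v] v psubset.prems by fastforce
    define W' where "W' = W - N W v"
    have "W' \<subset> W" using v unfolding W'_def N_def by auto
    moreover have pos': "\<forall>v\<in>W'. 0 < q v" using psubset.prems W'_def by auto
    have "\<exists>I. I \<subseteq> W' \<and> (\<forall>x\<in>I. \<forall>y\<in>I. \<not> E x y) \<and> (\<Sum>u\<in>W'. q u / s W' u) \<le> real (card I)"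
      using psubset.IH[OF \<open>W' \<subset> W\<close> pos'] unfolding s_def N_def .
    then obtain I' where I': "I' \<subseteq> W'" "\<forall>x\<in>I'. \<forall>y\<in>I'. \<not> E x y"
      "(\<Sum>u\<in>W'. q u / s W' u) \<le> real (card I')" by (elim exE conjE) simp
    define I where "I = insert v I'"
    have vI': "v \<notin> I'" using I' unfolding W'_def N_def by auto
    have finI': "finite I'" using I'(1) \<open>W' \<subset> W\<close> psubset.hyps by (meson finite_subset psubset_imp_subset)
    have "I \<subseteq> W" using I' v unfolding I_def W'_def by auto
    moreover have "\<forall>x\<in>I. \<forall>y\<in>I. \<not> E x y"
    proof -
      have "\<not> E v x" if "x \<in> I'" for x using that I'(1) unfolding W'_def N_def by auto
      then have "\<not> E x v" if "x \<in> I'" for x using that sym by blast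
      with \<open>\<And>x. x \<in> I' \<Longrightarrow> \<not> E v x\<close> show ?thesis using I'(2) irr unfolding I_def by auto
    qed
    moreover have "(\<Sum>u\<in>W. q u / s W u) \<le> real (card I)"
    proof -
      have NW: "N W v \<subseteq> W" using v unfolding N_def by auto
      have split: "(\<Sum>u\<in>W. q u / s W u) = (\<Sum>u\<in>N W v. q u / s W u) + (\<Sum>u\<in>W'. q u / s W u)"
        unfolding W'_def using sum.subset_diff[OF NW psubset.hyps] by (simp add: add.commute)
      have "(\<Sum>u\<in>N W v. q u / s W u) \<le> (\<Sum>u\<in>N W v. q u / s W v)"
      proof (rule sum_mono)
        fix u assume "u \<in> N W v"
        then have u: "u \<in> W" using NW by auto
        then show "q u / s W u \<le> q u / s W v"
          using v(2)[OF u] sv_pos psubset.prems by (intro divide_left_mono) auto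
      qed
      also have "\<dots> = 1" using sv_pos unfolding s_def by (simp add: sum_divide_distrib[symmetric])
      finally have A: "(\<Sum>u\<in>N W v. q u / s W u) \<le> 1" .
      have B: "(\<Sum>u\<in>W'. q u / s W u) \<le> (\<Sum>u\<in>W'. q u / s W' u)"
      proof (rule sum_mono)
        fix u assume u: "u \<in> W'"
        then have uW: "u \<in> W" unfolding W'_def by auto
        have "s W' u \<le> s W u" unfolding s_def
          using psubset.prems finN[of u] uW u unfolding W'_def N_def
          by (intro sum_mono2) auto
        moreover have "0 < s W' u" using s_ge[of W' u] uW psubset.prems \<open>W' \<subset> W\<close> by fastforce
        ultimately show "q u / s W u \<le> q u / s W' u"
          using psubset.prems uW by (intro divide_left_mono) auto
      qed
      have "real (card I) = real (card I') + 1" unfolding I_def using vI' finI' by simp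
      then show ?thesis using split A B I'(3) by linarith
    qed
    ultimately have "\<exists>I. I \<subseteq> W \<and> (\<forall>x\<in>I. \<forall>y\<in>I. \<not> E x y) \<and> (\<Sum>u\<in>W. q u / s W u) \<le> real (card I)"
      by blast
    then show ?thesis unfolding s_def N_def .
  qed
qed


theorem lemma4:
  fixes V :: "'a set" and E :: "'a \<Rightarrow> 'a \<Rightarrow> bool" and q :: "'a \<Rightarrow> real"
  assumes "simple_graph V E"
    and "\<And>v. v \<in> V \<Longrightarrow> 0 < q v \<and> q v \<le> 1"
  shows "(\<Sum>v\<in>V. q v * cval V q v / Qval E q v)
           \<le> (real (independence_number V E) + 1) / (1 - exp (-1))"
proof -
  note qb = assms(2)
  have fin: "finite V" and inV: "\<And>x y. E x y \<Longrightarrow> y \<in> V" and sym: "\<And>x y. E x y \<Longrightarrow> E y x"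
    and irr: "\<And>x. \<not> E x x"
    using assms(1) unfolding simple_graph_def by blast+
  define K :: real where "K = 1 - exp (-1)"
  have Kpos: "0 < K" unfolding K_def by simp
  define mu where "mu v = (\<Sum>w\<in>closed_nbhd E v. q w)" for v
  have cn: "closed_nbhd E v = {v} \<union> {w\<in>V. E v w}" if "v \<in> V" for v
    unfolding closed_nbhd_def using inV by auto
  have cnV: "closed_nbhd E v \<subseteq> V" if "v \<in> V" for v using cn[OF that] that by auto
  have cnfin: "finite (closed_nbhd E v)" if "v \<in> V" for v using cnV[OF that] fin finite_subset by blast
  have mu_ge: "q v \<le> mu v" if v: "v \<in> V" for v
  proof -
    have "(\<Sum>w\<in>{v}. q w) \<le> mu v" unfolding mu_def
      using cnfin[OF v] cnV[OF v] qb by (intro sum_mono2) (auto simp: closed_nbhd_def less_imp_le)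
    then show ?thesis by simp
  qed
  have Q_ge: "1 - exp (- mu v) \<le> Qval E q v" if v: "v \<in> V" for v
  proof -
    have "(\<Prod>w\<in>closed_nbhd E v. 1 - q w) \<le> (\<Prod>w\<in>closed_nbhd E v. exp (- q w))"
    proof (rule prod_mono)
      fix w assume "w \<in> closed_nbhd E v"
      then have "w \<in> V" using cnV[OF v] by auto
      then show "0 \<le> 1 - q w \<and> 1 - q w \<le> exp (- q w)"
        using qb[of w] exp_ge_add_one_self[of "- q w"] by auto
    qed
    also have "\<dots> = exp (- mu v)" unfolding mu_def
      using cnfin[OF v] by (simp add: exp_sum sum_negf[symmetric])
    finally show ?thesis unfolding Qval_def by simp
  qed
  have term_le: "q v * cval V q v / Qval E q v \<le> (q v * cval V q v + q v / mu v) / K"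
    if v: "v \<in> V" for v
  proof -
    have qv: "0 < q v" using qb v by auto
    have mupos: "0 < mu v" using mu_ge[OF v] qv by linarith
    have c0: "0 \<le> cval V q v" and c1: "cval V q v \<le> 1" using cval_bounds[OF fin qb] by auto
    have qc0: "0 \<le> q v * cval V q v" using qv c0 by simp
    show ?thesis
    proof (cases "1 \<le> mu v")
      case True
      have "exp (- mu v) \<le> exp (-1)" using True by simp
      then have "K \<le> Qval E q v" using Q_ge[OF v] unfolding K_def by linarith
      then have "q v * cval V q v / Qval E q v \<le> q v * cval V q v / K"
        using Kpos qc0 by (intro divide_left_mono) auto
      also have "\<dots> \<le> (q v * cval V q v + q v / mu v) / K"
        using Kpos qv mupos by (intro divide_right_mono) auto
      finally show ?thesis .
    next
      case False
      have "K * mu v \<le> Qval E q v"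
        using exp_bound[of "mu v"] False mupos Q_ge[OF v] unfolding K_def by (simp add: mult.commute)
      then have "q v * cval V q v / Qval E q v \<le> q v * cval V q v / (K * mu v)"
      proof -
        have kp: "0 < K * mu v" using Kpos mupos by simp
        then have "0 < Qval E q v" using \<open>K * mu v \<le> Qval E q v\<close> by linarith
        then show ?thesis using kp qc0 \<open>K * mu v \<le> Qval E q v\<close>
          by (intro divide_left_mono) (simp_all add: mult_pos_pos)
      qed
      also have "\<dots> \<le> q v / (K * mu v)"
        using Kpos mupos qv c1 by (intro divide_right_mono) (auto simp: mult_le_cancel_left1)
      also have "\<dots> \<le> (q v * cval V q v + q v / mu v) / K"
        using Kpos qc0 by (simp add: divide_right_mono field_simps)
      finally show ?thesis .
    qed
  qed
  obtain I where I: "I \<subseteq> V" "\<forall>x\<in>I. \<forall>y\<in>I. \<not> E x y"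
    "(\<Sum>v\<in>V. q v / (\<Sum>w\<in>{v} \<union> {w\<in>V. E v w}. q w)) \<le> real (card I)"
  proof -
    have "\<exists>I. I \<subseteq> V \<and> (\<forall>x\<in>I. \<forall>y\<in>I. \<not> E x y) \<and>
     (\<Sum>v\<in>V. q v / (\<Sum>w\<in>{v} \<union> {w\<in>V. E v w}. q w)) \<le> real (card I)"
    proof (rule caro_wei)
      show "\<And>x y. E x y \<Longrightarrow> E y x" by (rule sym)
      show "\<And>x. \<not> E x x" by (rule irr)
      show "finite V" by (rule fin)
      show "\<forall>v\<in>V. 0 < q v" using qb by auto
    qed
    then show ?thesis using that by (elim exE conjE) simp
  qed
  have "(\<Sum>v\<in>V. q v / mu v) = (\<Sum>v\<in>V. q v / (\<Sum>w\<in>{v} \<union> {w\<in>V. E v w}. q w))"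
    unfolding mu_def by (rule sum.cong[OF refl]) (simp add: cn)
  also have "\<dots> \<le> real (card I)" by (rule I(3))
  also have "real (card I) \<le> real (independence_number V E)"
  proof -
    have "finite (card ` {I. independent_set V E I})"
    proof (rule finite_imageI)
      show "finite {I. independent_set V E I}"
        by (rule finite_subset[of _ "Pow V"]) (use fin in \<open>auto simp: independent_set_def\<close>)
    qed
    moreover have "card I \<in> card ` {I. independent_set V E I}"
      using I unfolding independent_set_def by (intro imageI) simp
    ultimately have "card I \<le> independence_number V E" unfolding independence_number_def by (rule Max_ge)
    then show ?thesis by simp
  qed
  finally have alpha: "(\<Sum>v\<in>V. q v / mu v) \<le> real (independence_number V E)" by simp
  have "(\<Sum>v\<in>V. q v * cval V q v / Qval E q v) \<le> (\<Sum>v\<in>V. (q v * cval V q v + q v / mu v) / K)"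
    using term_le by (rule sum_mono)
  also have "\<dots> = ((\<Sum>v\<in>V. q v * cval V q v) + (\<Sum>v\<in>V. q v / mu v)) / K"
    by (simp add: sum_divide_distrib[symmetric] sum.distrib)
  also have "\<dots> \<le> (1 + real (independence_number V E)) / K"
  proof -
    have "(\<Sum>v\<in>V. q v * cval V q v) \<le> 1" by (rule sum_qc[OF fin]) (rule qb)
    then show ?thesis using alpha Kpos by (intro divide_right_mono) auto
  qed
  finally show ?thesis unfolding K_def by (simp add: add.commute)
qed

end
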